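(* Let $a,\alpha,\beta,\gamma,\delta,\varepsilon,q\in\mathbb{C}$ with $a\neq 0,1$, $1+\alpha+\beta=\gamma+\delta+\varepsilon$, $\alpha\beta\neq0$ and $\gamma+\varepsilon\notin\{0,-1,-2,\dots\}$. Let $N\ge0$ be an integer with $\varepsilon+\gamma-\alpha=-N$ (respectively $\varepsilon+\gamma-\beta=-N$). Define $$R_n=(1-a)\,n\,(\varepsilon+\gamma+n-1),\qquad Q_n=-R_n+a(1+n-\delta)(n+\varepsilon)+(a\alpha\beta-q),$$ $$P_n=-\frac{a}{n+\varepsilon+\gamma}\,(n+\varepsilon)(n+\varepsilon+\gamma-\alpha)(n+\varepsilon+\gamma-\beta),$$ suppose $q$ is such that the $(N+1)\times(N+1)$ tridiagonal matrix with diagonal $Q_0,\dots,Q_N$, superdiagonal $R_1,\dots,R_N$ and subdiagonal $P_0,\dots,P_{N-1}$ is singular, and let $(a_0,\dots,a_N)$ with $a_0=1$ be a vector in its kernel. Then the function $$u(z)=\sum_{n=0}^{N}a_n\,{}_2F_1(\alpha,\beta;\gamma+\varepsilon+n;z)$$ (a solution of the general Heun equation $u''+\big(\frac{\gamma}{z}+\frac{\delta}{z-1}+\frac{\varepsilon}{z-a}\big)u'+\frac{\alpha\beta z-q}{z(z-1)(z-a)}u=0$) is of the form $u(z)=(1-z)^{1-\delta}p(z)$ with $p$ a polynomial in $z$.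
   Context: ${}_2F_1(\alpha,\beta;c;z)$ denotes the Gauss hypergeometric function on $\mathbb{C}\setminus[1,\infty)$, and $(1-z)^{1-\delta}$ is taken with its principal branch there. *)

theory Defs
  imports "HOL-Analysis.Analysis" "HOL-Computational_Algebra.Polynomial"
begin

definition slit_plane :: "complex set" where
  "slit_plane = - {complex_of_real x | x. x \<ge> 1}"

definition hyp2F1_series :: "complex \<Rightarrow> complex \<Rightarrow> complex \<Rightarrow> complex \<Rightarrow> complex" where
  "hyp2F1_series al be c z =
     (\<Sum>n. pochhammer al n * pochhammer be n / (pochhammer c n * fact n) * z ^ n)"

text \<open>The Gauss hypergeometric function on the slit plane: the (unique, by the
  identity theorem) holomorphic function on the slit plane agreeing with the series
  on the unit disc.\<close>
definition hyp2F1 :: "complex \<Rightarrow> complex \<Rightarrow> complex \<Rightarrow> complex \<Rightarrow> complex" where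
  "hyp2F1 al be c = (SOME f. f holomorphic_on slit_plane \<and>
                       (\<forall>z\<in>ball 0 1. f z = hyp2F1_series al be c z))"

definition heunR :: "complex \<Rightarrow> complex \<Rightarrow> complex \<Rightarrow> nat \<Rightarrow> complex" where
  "heunR a ga ep n = (1 - a) * of_nat n * (ep + ga + of_nat n - 1)"

definition heunQ :: "complex \<Rightarrow> complex \<Rightarrow> complex \<Rightarrow> complex \<Rightarrow> complex \<Rightarrow> complex \<Rightarrow> complex \<Rightarrow> nat \<Rightarrow> complex" where
  "heunQ a al be ga de ep q n =
     - heunR a ga ep n + a * (1 + of_nat n - de) * (of_nat n + ep) + (a * al * be - q)"

definition heunP :: "complex \<Rightarrow> complex \<Rightarrow> complex \<Rightarrow> complex \<Rightarrow> complex \<Rightarrow> nat \<Rightarrow> complex" where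
  "heunP a al be ga ep n =
     - (a / (of_nat n + ep + ga)) * (of_nat n + ep) * (of_nat n + ep + ga - al)
       * (of_nat n + ep + ga - be)"

definition heunM :: "complex \<Rightarrow> complex \<Rightarrow> complex \<Rightarrow> complex \<Rightarrow> complex \<Rightarrow> complex \<Rightarrow> complex
                     \<Rightarrow> nat \<Rightarrow> nat \<Rightarrow> complex" where
  "heunM a al be ga de ep q i j =
     (if j = i then heunQ a al be ga de ep q i
      else if j = i + 1 then heunR a ga ep j
      else if i = j + 1 then heunP a al be ga ep j
      else 0)"

end

theory Submission
  imports Defs "HOL-Complex_Analysis.Complex_Analysis"
begin

lemma slit_plane_alt: "slit_plane = - {z. Im z = 0 \<and> 1 \<le> Re z}"
  unfolding slit_plane_def
  by (auto simp: complex_eq_iff)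

lemma slit_open: "open slit_plane"
  unfolding slit_plane_alt
  by (intro open_Compl closed_Collect_conj continuous_intros closed_Collect_eq closed_Collect_le)

lemma slit_nonpos: "z \<in> slit_plane \<Longrightarrow> 1 - z \<notin> \<real>\<^sub>\<le>\<^sub>0"
  unfolding slit_plane_alt by (auto simp: complex_nonpos_Reals_iff)

lemma ball_sub_slit: "ball 0 1 \<subseteq> slit_plane"
proof
  fix z :: complex assume "z \<in> ball 0 1"
  hence "norm z < 1" by simp
  moreover have "\<bar>Re z\<bar> \<le> norm z" by (rule abs_Re_le_cmod)
  ultimately show "z \<in> slit_plane" unfolding slit_plane_alt by auto
qed

lemma slit_conn: "connected slit_plane"
proof (rule starlike_imp_connected)
  show "starlike slit_plane"
    unfolding starlike_def
  proof (intro bexI ballI subsetI)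
    show "0 \<in> slit_plane" unfolding slit_plane_alt by auto
    fix x y assume x: "x \<in> slit_plane" and y: "y \<in> closed_segment 0 x"
    then obtain u :: real where u: "0 \<le> u" "u \<le> 1" "y = u *\<^sub>R x"
      by (auto simp: closed_segment_def)
    show "y \<in> slit_plane"
    proof (rule ccontr)
      assume "y \<notin> slit_plane"
      hence h: "u * Im x = 0" "1 \<le> u * Re x" using u unfolding slit_plane_alt by auto
      hence "u > 0" using u by (cases "u = 0") auto
      hence "Im x = 0" using h by simp
      moreover have "Re x \<ge> 1"
      proof (rule ccontr)
        assume "\<not> Re x \<ge> 1"
        hence "u * Re x < 1" using u \<open>u>0\<close>
          by (smt (verit) mult_le_cancel_left1 mult_left_le_one_le)
        thus False using h by simp
      qed
      ultimately show False using x unfolding slit_plane_alt by auto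
    qed
  qed
qed

definition hcoef :: "complex \<Rightarrow> complex \<Rightarrow> complex \<Rightarrow> nat \<Rightarrow> complex" where
  "hcoef al be c n = pochhammer al n * pochhammer be n / (pochhammer c n * fact n)"

lemma base_coef:
  assumes "\<forall>m::nat. al \<noteq> - of_nat m"
  shows "hcoef al be al n = (-1)^n * ((-be) gchoose n)"
proof -
  have "pochhammer al n \<noteq> 0" using assms by (auto simp: pochhammer_eq_0_iff)
  thus ?thesis by (simp add: hcoef_def gbinomial_pochhammer power_mult_distrib[symmetric])
qed

lemma deriv_powr_1m:
  fixes z s :: complex
  assumes "1 - z \<notin> \<real>\<^sub>\<le>\<^sub>0"
  shows "((\<lambda>z. (1 - z) powr s) has_field_derivative (- (s * (1 - z) powr (s - 1)))) (at z)"
proof -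
  have d: "((\<lambda>z. 1 - z) has_field_derivative -1) (at z)"
    by (auto intro!: derivative_eq_intros)
  from DERIV_chain2[OF has_field_derivative_powr[OF assms] d] show ?thesis by simp
qed

lemma fps_key:
  assumes "\<forall>m::nat. al - of_nat k \<noteq> - of_nat m"
  shows "\<exists>F p. fps_conv_radius F \<ge> 1 \<and> (\<forall>n. F $ n = hcoef al be (al - of_nat k) n) \<and>
     (\<forall>z\<in>ball 0 1. eval_fps F z = (1 - z) powr (-be - of_nat k) * poly p z)"
  using assms
proof (induction k)
  case 0
  define F where "F = Abs_fps (\<lambda>n. (-1)^n * ((-be) gchoose n))"
  have "fps_conv_radius F = fps_conv_radius (fps_binomial (-be))"
    unfolding fps_conv_radius_def F_def
    by (intro conv_radius_cong) (auto simp: norm_mult norm_power)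
  hence rad: "fps_conv_radius F \<ge> 1"
    by (simp add: fps_conv_radius_binomial)
  have co: "\<forall>n. F $ n = hcoef al be (al - of_nat 0) n"
    using 0 base_coef[of al be] by (simp add: F_def)
  have ev: "\<forall>z\<in>ball 0 1. eval_fps F z = (1 - z) powr (-be - of_nat 0) * poly 1 z"
  proof
    fix z :: complex assume "z \<in> ball 0 1"
    hence nz: "norm (-z) < 1" by simp
    have "eval_fps F z = eval_fps (fps_binomial (-be)) (-z)"
      unfolding eval_fps_def F_def
      by (intro suminf_cong) (simp only: fps_nth_Abs_fps fps_binomial_nth power_minus[of z] mult_ac)
    also have "\<dots> = (1 - z) powr (-be)" using eval_fps_binomial[OF nz] by simp
    finally show "eval_fps F z = (1 - z) powr (-be - of_nat 0) * poly 1 z" by simp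
  qed
  show ?case using rad co ev by blast
next
  case (Suc k)
  define c where "c = al - of_nat (Suc k)"
  have c1: "al - of_nat k = c + 1" by (simp add: c_def)
  have hk: "\<forall>m::nat. al - of_nat k \<noteq> - of_nat m"
  proof
    fix m :: nat
    show "al - of_nat k \<noteq> - of_nat m"
    proof
      assume h: "al - of_nat k = - of_nat m"
      have "al - of_nat (Suc k) = (al - of_nat k) - 1" by simp
      also have "\<dots> = - of_nat (Suc m)" using h by simp
      finally show False using Suc.prems by blast
    qed
  qed
  from Suc.IH[OF hk] obtain F p where
    rad: "fps_conv_radius F \<ge> 1" and co: "\<forall>n. F $ n = hcoef al be (al - of_nat k) n"
    and ev: "\<forall>z\<in>ball 0 1. eval_fps F z = (1 - z) powr (-be - of_nat k) * poly p z" by blast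
  have cnz: "c \<noteq> 0" using Suc.prems[rule_format, of 0] by (simp add: c_def)
  have pnz: "pochhammer (c + 1) n \<noteq> 0" for n
    using hk by (auto simp: pochhammer_eq_0_iff c1[symmetric])
  define G where "G = F + fps_const (1 / c) * (fps_X * fps_deriv F)"
  define s where "s = -be - of_nat k"
  define q where "q = [:1,-1:] * p + smult (1 / c) ([:0,1:] * (smult (-s) p + [:1,-1:] * pderiv p))"
  have radD: "fps_conv_radius (fps_deriv F) \<ge> 1"
    using fps_conv_radius_deriv[of F] rad by order
  have radX: "fps_conv_radius (fps_X * fps_deriv F) \<ge> 1"
    using fps_conv_radius_mult[of fps_X "fps_deriv F"] radD by (simp add: min_def split: if_splits)
  have radC: "fps_conv_radius (fps_const (1 / c) * (fps_X * fps_deriv F)) \<ge> 1"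
    using fps_conv_radius_mult[of "fps_const (1/c)" "fps_X * fps_deriv F"] radX
    by (simp add: min_def split: if_splits)
  have radG: "fps_conv_radius G \<ge> 1"
    using fps_conv_radius_add[of F "fps_const (1 / c) * (fps_X * fps_deriv F)"] radC rad
    unfolding G_def by (simp add: min_def split: if_splits)
  have coG: "G $ n = hcoef al be (al - of_nat (Suc k)) n" for n
  proof -
    have P: "pochhammer c n * (c + of_nat n) = c * pochhammer (c + 1) n"
      using pochhammer_rec[of c n] pochhammer_Suc[of c n] by simp
    have nz2: "pochhammer c (Suc n) \<noteq> 0"
      using Suc.prems by (auto simp: pochhammer_eq_0_iff c_def)
    hence nz3: "pochhammer c n \<noteq> 0" "c + of_nat n \<noteq> 0"
      by (simp_all add: pochhammer_Suc)
    have "G $ n = F $ n * (1 + of_nat n / c)"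
      by (cases n) (simp_all add: G_def algebra_simps add_divide_distrib)
    also have "\<dots> = F $ n * ((c + of_nat n) / c)" using cnz by (simp add: field_simps)
    also have "\<dots> = pochhammer al n * pochhammer be n * (c + of_nat n)
          / ((c * pochhammer (c + 1) n) * fact n)"
      using co unfolding hcoef_def c1 by simp
    also have "\<dots> = pochhammer al n * pochhammer be n * (c + of_nat n)
          / ((pochhammer c n * (c + of_nat n)) * fact n)" by (simp only: P)
    also have "\<dots> = (pochhammer al n * pochhammer be n) * (c + of_nat n)
          / ((pochhammer c n * fact n) * (c + of_nat n))" by (simp only: ac_simps)
    also have "\<dots> = hcoef al be c n"
      unfolding hcoef_def by (rule mult_divide_mult_cancel_right[OF nz3(2)])
    finally show ?thesis by (simp add: c_def)
  qed
  have evG: "eval_fps G z = (1 - z) powr (-be - of_nat (Suc k)) * poly q z" if z: "z \<in> ball 0 1" for z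
  proof -
    have nz: "norm z < 1" using z by simp
    have e1: "ereal (norm z) < 1" using nz by simp
    have z1: "1 - z \<notin> \<real>\<^sub>\<le>\<^sub>0" using slit_nonpos ball_sub_slit z by blast
    hence z1': "1 - z \<noteq> 0" by auto
    have pw: "(1 - z) powr s = (1 - z) powr (s - 1) * (1 - z)"
      using powr_add[of "1 - z" "s - 1" 1] by simp
    define H where "H = (\<lambda>z. (1 - z) powr s * poly p z)"
    have dH: "(H has_field_derivative (- (s * (1 - z) powr (s - 1))) * poly p z
                 + (1 - z) powr s * poly (pderiv p) z) (at z)"
      unfolding H_def using DERIV_mult[OF deriv_powr_1m[OF z1, of s] poly_DERIV[of p z]]
      by (simp add: ac_simps)
    have dF: "(eval_fps F has_field_derivative eval_fps (fps_deriv F) z) (at z)"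
      by (rule has_field_derivative_eval_fps) (use e1 rad in \<open>order\<close>)
    have dF': "(H has_field_derivative eval_fps (fps_deriv F) z) (at z)"
      by (rule has_field_derivative_transform_within_open[OF dF _ z])
         (use ev in \<open>auto simp: H_def s_def\<close>)
    have dv: "eval_fps (fps_deriv F) z = (- (s * (1 - z) powr (s - 1))) * poly p z
                 + (1 - z) powr s * poly (pderiv p) z"
      using DERIV_unique[OF dF' dH] .
    have "eval_fps G z = eval_fps F z + (1 / c) * (z * eval_fps (fps_deriv F) z)"
      unfolding G_def
      apply (subst eval_fps_add)
        apply (use e1 rad radC in order)
       apply (use e1 rad radC in order)
      apply (subst eval_fps_mult)
        apply simp
       apply (use e1 radX in order)
      apply (subst eval_fps_mult)
        apply simp
       apply (use e1 radD in order)
      apply simp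
      done
    also have "\<dots> = (1 - z) powr (s - 1) * poly q z"
      unfolding dv ev[rule_format, OF z] s_def[symmetric] pw q_def
      by (simp add: algebra_simps)
    also have "s - 1 = -be - of_nat (Suc k)" by (simp add: s_def)
    finally show ?thesis .
  qed
  show ?case using radG coG evG by blast
qed


lemma poly_holo: "(\<lambda>z. poly p z) holomorphic_on (S :: complex set)"
  unfolding holomorphic_on_def field_differentiable_def
  by (meson has_field_derivative_at_within poly_DERIV)

lemma hyp_key:
  assumes "\<forall>m::nat. al - of_nat k \<noteq> - of_nat m"
  shows "\<exists>p. \<forall>z\<in>slit_plane. hyp2F1 al be (al - of_nat k) z = (1 - z) powr (-be - of_nat k) * poly p z"
proof -
  obtain F p where rad: "fps_conv_radius F \<ge> 1" and co: "\<forall>n. F $ n = hcoef al be (al - of_nat k) n"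
    and ev: "\<forall>z\<in>ball 0 1. eval_fps F z = (1 - z) powr (-be - of_nat k) * poly p z"
    using fps_key[OF assms, of be] by blast
  define H where "H = (\<lambda>z. (1 - z) powr (-be - of_nat k) * poly p z)"
  have holH: "H holomorphic_on slit_plane"
    unfolding H_def
    by (intro holomorphic_intros poly_holo) (auto dest: slit_nonpos)
  have agree: "\<forall>z\<in>ball 0 1. H z = hyp2F1_series al be (al - of_nat k) z"
  proof
    fix z :: complex assume z: "z \<in> ball 0 1"
    have "H z = eval_fps F z" using ev z by (simp add: H_def)
    also have "\<dots> = hyp2F1_series al be (al - of_nat k) z"
      unfolding eval_fps_def hyp2F1_series_def using co by (simp add: hcoef_def)
    finally show "H z = hyp2F1_series al be (al - of_nat k) z" .
  qed
  have ex: "\<exists>f. f holomorphic_on slit_plane \<and> (\<forall>z\<in>ball 0 1. f z = hyp2F1_series al be (al - of_nat k) z)"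
    using holH agree by blast
  from someI_ex[OF ex] have g: "hyp2F1 al be (al - of_nat k) holomorphic_on slit_plane"
      "\<forall>z\<in>ball 0 1. hyp2F1 al be (al - of_nat k) z = hyp2F1_series al be (al - of_nat k) z"
    unfolding hyp2F1_def by blast+
  have "\<forall>z\<in>slit_plane. hyp2F1 al be (al - of_nat k) z = H z"
  proof
    fix z assume z: "z \<in> slit_plane"
    show "hyp2F1 al be (al - of_nat k) z = H z"
      by (rule analytic_continuation_open[of "ball 0 1" slit_plane])
         (use g agree holH z slit_open slit_conn ball_sub_slit in auto)
  qed
  thus ?thesis unfolding H_def by blast
qed

lemma hyp_sym: "hyp2F1 al be c = hyp2F1 be al c"
proof -
  have "hyp2F1_series al be c = hyp2F1_series be al c"
    unfolding hyp2F1_series_def by (simp add: ac_simps)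
  thus ?thesis unfolding hyp2F1_def by simp
qed

lemma main_aux:
  fixes al be ga de ep :: complex and N :: nat and c :: "nat \<Rightarrow> complex"
  assumes e1: "1 + al + be = ga + de + ep"
    and e2: "ga + ep \<notin> {- of_nat m | m. m \<in> (UNIV :: nat set)}"
    and e3: "ep + ga - al = - of_nat N"
  shows "\<exists>p :: complex poly. \<forall>z\<in>slit_plane.
           (\<Sum>n\<le>N. c n * hyp2F1 al be (ga + ep + of_nat n) z)
             = (1 - z) powr (1 - de) * poly p z"
proof -
  have eqc: "ga + ep + of_nat n = al - of_nat (N - n)" if "n \<le> N" for n
    using e3 that by (simp add: of_nat_diff algebra_simps)
  have "\<forall>n\<in>{..N}. \<exists>p. \<forall>z\<in>slit_plane. hyp2F1 al be (al - of_nat (N - n)) z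
          = (1 - z) powr (-be - of_nat (N - n)) * poly p z"
  proof
    fix n assume n: "n \<in> {..N}"
    show "\<exists>p. \<forall>z\<in>slit_plane. hyp2F1 al be (al - of_nat (N - n)) z
          = (1 - z) powr (-be - of_nat (N - n)) * poly p z"
    proof (rule hyp_key, rule allI)
      fix m :: nat
      show "al - of_nat (N - n) \<noteq> - of_nat m"
      proof
        assume h: "al - of_nat (N - n) = - of_nat m"
        have "n \<le> N" using n by simp
        hence "ga + ep + of_nat n = - of_nat m" using eqc[of n] h by (simp only:)
        hence "ga + ep = - of_nat (m + n)" by (simp add: algebra_simps eq_diff_eq)
        thus False using e2 by blast
      qed
    qed
  qed
  then obtain P where P: "\<forall>n\<in>{..N}. \<forall>z\<in>slit_plane. hyp2F1 al be (al - of_nat (N - n)) z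
          = (1 - z) powr (-be - of_nat (N - n)) * poly (P n) z"
    by metis
  have de: "1 - de = -be - of_nat N"
    using e1 e3 by (simp add: complex_eq_iff)
  define p where "p = (\<Sum>n\<le>N. smult (c n) ([:1,-1:]^n * P n))"
  show ?thesis
  proof (intro exI ballI)
    fix z assume z: "z \<in> slit_plane"
    have z1: "1 - z \<noteq> 0" using slit_nonpos[OF z] by auto
    have "(\<Sum>n\<le>N. c n * hyp2F1 al be (ga + ep + of_nat n) z)
        = (\<Sum>n\<le>N. c n * ((1 - z) powr (1 - de) * ((1 - z)^n * poly (P n) z)))"
    proof (rule sum.cong[OF refl])
      fix n assume n: "n \<in> {..N}"
      have ex: "-be - of_nat (N - n) = (1 - de) + of_nat n"
        using n by (simp add: de of_nat_diff)
      have nN: "n \<le> N" using n by simp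
      have "hyp2F1 al be (ga + ep + of_nat n) z = hyp2F1 al be (al - of_nat (N - n)) z"
        by (simp only: eqc[OF nN])
      also have "\<dots> = (1 - z) powr (-be - of_nat (N - n)) * poly (P n) z"
        using P n z by blast
      also have "\<dots> = (1 - z) powr (1 - de) * ((1 - z)^n * poly (P n) z)"
        unfolding ex powr_add using powr_nat'[of "1 - z" n] z1 by simp
      finally show "c n * hyp2F1 al be (ga + ep + of_nat n) z
          = c n * ((1 - z) powr (1 - de) * ((1 - z)^n * poly (P n) z))" by simp
    qed
    also have "\<dots> = (1 - z) powr (1 - de) * poly p z"
      unfolding p_def poly_sum sum_distrib_left
      by (intro sum.cong[OF refl]) (simp add: poly_power ac_simps)
    finally show "(\<Sum>n\<le>N. c n * hyp2F1 al be (ga + ep + of_nat n) z)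
             = (1 - z) powr (1 - de) * poly p z" .
  qed
qed

theorem mainTheorem3:
  fixes a al be ga de ep q :: complex and N :: nat and c :: "nat \<Rightarrow> complex"
  assumes "a \<noteq> 0" and "a \<noteq> 1"
    and "1 + al + be = ga + de + ep"
    and "al * be \<noteq> 0"
    and "ga + ep \<notin> {- of_nat m | m. m \<in> (UNIV :: nat set)}"
    and "ep + ga - al = - of_nat N \<or> ep + ga - be = - of_nat N"
    and "c 0 = 1"
    and "\<forall>i\<le>N. (\<Sum>j\<le>N. heunM a al be ga de ep q i j * c j) = 0"
  shows "\<exists>p :: complex poly. \<forall>z\<in>slit_plane.
           (\<Sum>n\<le>N. c n * hyp2F1 al be (ga + ep + of_nat n) z)
             = (1 - z) powr (1 - de) * poly p z"
  using assms(6)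
proof
  assume "ep + ga - al = - of_nat N"
  thus ?thesis using main_aux assms(3,5) by blast
next
  assume h: "ep + ga - be = - of_nat N"
  have "1 + be + al = ga + de + ep" using assms(3) by (simp add: ac_simps)
  from main_aux[OF this assms(5) h, of c] show ?thesis by (simp add: hyp_sym)
qed

end
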